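(* Let $\mathfrak{F}'$ be the set of maximal elements of $\mathfrak{F}\setminus\{\mathcal{F}_\infty\}$ and $\mathfrak{F}''$ the set of maximal elements of $\mathfrak{F}\setminus(\mathfrak{F}'\cup\{\mathcal{F}_\infty\})$. For a nonempty finite set $E\subseteq\mathbb{N}$, the filter $\mathcal{F}_E$ belongs to $\mathfrak{F}''$ if and only if one of the following holds: (1) there is an odd prime $p$ with $p\in\Pi_E$ and $A_E=\{2,p\}$; (2) there are two distinct odd primes $p,q$ with $A_E=\{2,p,q\}$ and $\Pi_E\subseteq\{2\}$.
   Context: $\mathbb{N}=\{1,2,\dots\}$, $\mathbb{N}_0=\{0\}\cup\mathbb{N}$, $\Pi$ the set of primes, $\Pi_z$ the set of prime divisors of $z$. The Kirch topology $\tau_K$ on $\mathbb{N}$ is generated by the base of all $a+b\mathbb{N}_0=\{a+bn:n\in\mathbb{N}_0\}$ with $a,b\in\mathbb{N}$ coprime and $b$ square-free. Closures $\overline{U}$ are in $\tau_K$; $\tau_x=\{U\in\tau_K:x\in U\}$. For finite $E\subseteq\mathbb{N}$, $\mathcal{F}_E=\{B\subseteq\mathbb{N}:\exists (U_x)_{x\in E}\in\prod_{x\in E}\tau_x\ (\bigcap_{x\in E}\overline{U_x}\subseteq B)\}$ (with $\mathcal{F}_\emptyset=\{\mathbb{N}\}$); $\mathcal{F}_\infty=\{B\subseteq\mathbb{N}:\exists n\in\mathbb{N}\ \exists U_1,\dots,U_n\in\tau_K\setminus\{\emptyset\}\ (\overline{U_1}\cap\dots\cap\overline{U_n}\subseteq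 B)\}$; $\mathfrak{F}=\{\mathcal{F}_E:E\subseteq\mathbb{N}\text{ finite}\}\cup\{\mathcal{F}_\infty\}$, ordered by inclusion. For nonempty finite $E$: $\Pi_E=\bigcap_{z\in E}\Pi_z$ and $A_E=\{p\in\Pi:\exists k\in\mathbb{N}\ (E\subseteq p\mathbb{Z}\cup(k+p\mathbb{Z}))\}$. *)

theory Defs
  imports "HOL-Computational_Algebra.Primes" "HOL-Computational_Algebra.Squarefree"
begin

text \<open>The positive integers N = {1,2,...} are modelled as the subset {0<..} of nat.\<close>

definition arith_prog :: "nat \<Rightarrow> nat \<Rightarrow> nat set" where
  "arith_prog a b = {a + b * n | n. True}"

definition kirch_basic :: "nat set \<Rightarrow> bool" where
  "kirch_basic S \<longleftrightarrow> (\<exists>a b. 0 < a \<and> 0 < b \<and> coprime a b \<and> squarefree b \<and> S = arith_prog a b)"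

definition kirch_open :: "nat set \<Rightarrow> bool" where
  "kirch_open U \<longleftrightarrow> U \<subseteq> {0<..} \<and> (\<forall>x\<in>U. \<exists>S. kirch_basic S \<and> x \<in> S \<and> S \<subseteq> U)"

definition kirch_closure :: "nat set \<Rightarrow> nat set" where
  "kirch_closure A = {x \<in> {0<..}. \<forall>V. kirch_open V \<and> x \<in> V \<longrightarrow> V \<inter> A \<noteq> {}}"

definition filt :: "nat set \<Rightarrow> nat set set" where
  "filt E = {B. B \<subseteq> {0<..} \<and> (\<exists>U. (\<forall>x\<in>E. kirch_open (U x) \<and> x \<in> U x) \<and>
                 {0<..} \<inter> (\<Inter>x\<in>E. kirch_closure (U x)) \<subseteq> B)}"

definition filt_inf :: "nat set set" where
  "filt_inf = {B. B \<subseteq> {0<..} \<and> (\<exists>\<U>. finite \<U> \<and> \<U> \<noteq> {} \<and>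
                 (\<forall>U\<in>\<U>. kirch_open U \<and> U \<noteq> {}) \<and> (\<Inter>U\<in>\<U>. kirch_closure U) \<subseteq> B)}"

definition filt_family :: "nat set set set" where
  "filt_family = {filt E | E. finite E \<and> E \<subseteq> {0<..}} \<union> {filt_inf}"

definition maximals :: "'a set set \<Rightarrow> 'a set set" where
  "maximals S = {F \<in> S. \<forall>G\<in>S. F \<subseteq> G \<longrightarrow> G = F}"

definition F1 :: "nat set set set" where
  "F1 = maximals (filt_family - {filt_inf})"

definition F2 :: "nat set set set" where
  "F2 = maximals (filt_family - (F1 \<union> {filt_inf}))"

definition Pi_E :: "nat set \<Rightarrow> nat set" where
  "Pi_E E = (\<Inter>z\<in>E. prime_factors z)"

definition A_E :: "nat set \<Rightarrow> nat set" where
  "A_E E = {p. prime p \<and> (\<exists>k>0. \<forall>z\<in>E. p dvd z \<or> z mod p = k mod p)}"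

end

theory Submission
  imports Defs
begin

lemma mem_ap: "x \<in> arith_prog a b \<longleftrightarrow> (\<exists>n. x = a + b*n)"
  by (auto simp: arith_prog_def)

lemma basic_open:
  assumes "0<a" "0<b" "coprime a b" "squarefree b"
  shows "kirch_open (arith_prog a b)"
  unfolding kirch_open_def kirch_basic_def using assms by (auto simp: arith_prog_def)

lemma closure_mono: "A \<subseteq> B \<Longrightarrow> kirch_closure A \<subseteq> kirch_closure B"
  unfolding kirch_closure_def by blast

lemma closure_pos: "kirch_closure A \<subseteq> {0<..}"
  unfolding kirch_closure_def by blast

lemma closD:
  assumes y: "y \<in> kirch_closure (arith_prog a b)" and p: "prime p" "p dvd b" "\<not> p dvd y"
  shows "y mod p = a mod p"
proof -
  have y0: "0 < y" using y unfolding kirch_closure_def by auto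
  have "coprime y p" using p prime_imp_coprime coprime_commute by blast
  moreover have "squarefree p" using p squarefree_prime by blast
  moreover have "0 < p" using p prime_gt_0_nat by blast
  ultimately have "kirch_open (arith_prog y p)" using y0 basic_open by blast
  moreover have "y \<in> arith_prog y p" by (auto simp: arith_prog_def)
  ultimately have "arith_prog y p \<inter> arith_prog a b \<noteq> {}" using y unfolding kirch_closure_def by blast
  then obtain n m where e: "y + p*n = a + b*m" by (auto simp: arith_prog_def)
  obtain k where "b = p*k" using p by (auto elim: dvdE)
  then have "(y + p*n) mod p = (a + b*m) mod p" using e by simp
  then show ?thesis using \<open>b = p*k\<close> by (simp add: mult.assoc)
qed

lemma ap_inter:
  assumes "0 < b" "0 < d" and g: "int (gcd b d) dvd int c - int a"
  shows "\<exists>z. z \<in> arith_prog a b \<and> z \<in> arith_prog c d"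
proof -
  obtain u v where uv: "u * int b + v * int d = gcd (int b) (int d)" using bezout_int by blast
  obtain t where t: "int c - int a = int (gcd b d) * t" using g by (auto elim: dvdE)
  define K where "K = \<bar>u*t\<bar> + \<bar>v*t\<bar>"
  have K0: "0 \<le> K" unfolding K_def by simp
  have d1: "0 \<le> (int d - 1) * K" using assms(2) K0 by simp
  have b1: "0 \<le> (int b - 1) * K" using assms(1) K0 by simp
  define n where "n = u*t + int d * K"
  define m where "m = - v*t + int b * K"
  have n0: "n \<ge> 0" unfolding n_def using d1 unfolding K_def by (simp add: algebra_simps)
  have m0: "m \<ge> 0" unfolding m_def using b1 unfolding K_def by (simp add: algebra_simps)
  have gg: "gcd (int b) (int d) = int (gcd b d)" by simp
  have eq: "int a + int b * n = int c + int d * m"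
  proof -
    have "int c - int a = (u * int b + v * int d) * t" using t uv gg by simp
    then show ?thesis unfolding n_def m_def by (simp add: algebra_simps)
  qed
  define z where "z = a + b * nat n"
  have "z \<in> arith_prog a b" unfolding z_def by (auto simp: arith_prog_def)
  moreover have "z = c + d * nat m"
  proof -
    have "int z = int a + int b * n" unfolding z_def using n0 by simp
    also have "\<dots> = int (c + d * nat m)" using eq m0 by simp
    finally show ?thesis by linarith
  qed
  then have "z \<in> arith_prog c d" by (auto simp: arith_prog_def)
  ultimately show ?thesis by blast
qed
lemma sqf_dvd:
  fixes g :: nat and m :: int
  assumes "squarefree g" "\<And>p. prime p \<Longrightarrow> p dvd g \<Longrightarrow> int p dvd m"
  shows "int g dvd m"
  using assms
proof (induction g rule: less_induct)
  case (less g)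
  show ?case
  proof (cases "g = 1")
    case True then show ?thesis by simp
  next
    case False
    have "g \<noteq> 0" using less.prems(1) by (metis not_squarefree_0)
    then obtain p where p: "prime p" "p dvd g" using False prime_factor_nat by blast
    then obtain g' where g': "g = p * g'" by (auto elim: dvdE)
    have "squarefree g'" using squarefree_mono[OF _ less.prems(1)] g' by simp
    have "\<not> p dvd g'"
    proof
      assume "p dvd g'"
      then have "p^2 dvd g" using g' by (simp add: power2_eq_square)
      then show False using squarefreeD[OF less.prems(1) \<open>p^2 dvd g\<close>] p(1) by simp
    qed
    then have cop: "coprime (int p) (int g')" using prime_imp_coprime[OF p(1)] by simp
    have "0 < g'" using g' \<open>g \<noteq> 0\<close> by auto
    have "1 < p" using prime_gt_1_nat[OF p(1)] .
    have "g' < g" using \<open>0 < g'\<close> \<open>1 < p\<close> unfolding g' by simp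
    moreover have "\<And>q. prime q \<Longrightarrow> q dvd g' \<Longrightarrow> int q dvd m"
      using less.prems(2) unfolding g' by (meson dvd_mult)
    ultimately have "int g' dvd m" using less.IH \<open>squarefree g'\<close> by blast
    moreover have "int p dvd m" using less.prems(2) p by blast
    ultimately have "int p * int g' dvd m" using cop divides_mult by blast
    then show ?thesis unfolding g' by simp
  qed
qed

lemma mod_lin: "(p::nat) dvd b \<Longrightarrow> (a + b*n) mod p = a mod p"
  by (auto elim!: dvdE simp: mult.assoc)

lemma closC:
  assumes "0<a" "0<b" "coprime a b" "squarefree b" "0<y"
    and cond: "\<And>p. prime p \<Longrightarrow> p dvd b \<Longrightarrow> p dvd y \<or> y mod p = a mod p"
  shows "y \<in> kirch_closure (arith_prog a b)"
  unfolding kirch_closure_def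
proof (intro CollectI conjI allI impI)
  show "y \<in> {0<..}" using assms by simp
  fix V assume V: "kirch_open V \<and> y \<in> V"
  then obtain S where S: "kirch_basic S" "y \<in> S" "S \<subseteq> V" unfolding kirch_open_def by blast
  then obtain c d where cd: "0<c" "0<d" "coprime c d" "squarefree d" "S = arith_prog c d"
    unfolding kirch_basic_def by blast
  then obtain m0 where y: "y = c + d*m0" using S(2) by (auto simp: arith_prog_def)
  define g where "g = gcd b d"
  have sg: "squarefree g" unfolding g_def using assms(4) squarefree_mono by (metis gcd_dvd1)
  have "int g dvd int c - int a"
  proof (rule sqf_dvd[OF sg])
    fix p assume p: "prime p" "p dvd g"
    then have pb: "p dvd b" and pd: "p dvd d" unfolding g_def by auto
    have npy: "\<not> p dvd y"
    proof
      assume "p dvd y"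
      then have "p dvd c + d*m0" using y by simp
      moreover have "p dvd d*m0" using pd by simp
      ultimately have "p dvd c" using dvd_add_left_iff by blast
      then show False using pd cd(3) p(1) by (metis coprime_common_divisor not_prime_unit)
    qed
    then have "y mod p = a mod p" using cond[OF p(1) pb] by blast
    moreover have "y mod p = c mod p" using pd y by (auto elim!: dvdE simp: mult.assoc)
    ultimately have "c mod p = a mod p" by simp
    then have "int c mod int p = int a mod int p" by (metis of_nat_mod)
    then show "int p dvd int c - int a" by (simp add: mod_eq_dvd_iff)
  qed
  then obtain z where "z \<in> arith_prog a b" "z \<in> arith_prog c d"
    using ap_inter[OF assms(2) cd(2)] unfolding g_def by blast
  then show "V \<inter> arith_prog a b \<noteq> {}" using S(3) cd(5) by blast
qed

definition tp :: "nat set \<Rightarrow> nat \<Rightarrow> nat \<Rightarrow> bool" where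
  "tp E p y \<longleftrightarrow> (\<forall>x\<in>E. p dvd x \<or> p dvd y \<or> y mod p = x mod p)"

definition Sset :: "nat set \<Rightarrow> nat set \<Rightarrow> nat set" where
  "Sset E P = {y. 0 < y \<and> (\<forall>p\<in>P. tp E p y)}"

lemma sqf_prod_primes:
  assumes "finite P" "\<forall>p\<in>P. prime (p::nat)"
  shows "squarefree (\<Prod>P)"
  using assms by (intro squarefree_prod_coprime) (auto intro: primes_coprime squarefree_prime)

lemma filt_char:
  assumes "finite E" "E \<subseteq> {0<..}"
  shows "B \<in> filt E \<longleftrightarrow> B \<subseteq> {0<..} \<and> (\<exists>P. finite P \<and> (\<forall>p\<in>P. prime p) \<and> Sset E P \<subseteq> B)"
proof
  assume "B \<in> filt E"
  then obtain U where B0: "B \<subseteq> {0<..}" and U: "\<forall>x\<in>E. kirch_open (U x) \<and> x \<in> U x"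
    and sub: "{0<..} \<inter> (\<Inter>x\<in>E. kirch_closure (U x)) \<subseteq> B" unfolding filt_def by blast
  have "\<forall>x\<in>E. \<exists>ab. 0 < fst ab \<and> 0 < snd ab \<and> coprime (fst ab) (snd ab) \<and> squarefree (snd ab)
          \<and> x \<in> arith_prog (fst ab) (snd ab) \<and> arith_prog (fst ab) (snd ab) \<subseteq> U x"
  proof
    fix x assume "x \<in> E"
    then obtain S where "kirch_basic S" "x \<in> S" "S \<subseteq> U x" using U unfolding kirch_open_def by blast
    then obtain a b where "0 < a" "0 < b" "coprime a b" "squarefree b" "S = arith_prog a b"
      unfolding kirch_basic_def by blast
    then show "\<exists>ab. 0 < fst ab \<and> 0 < snd ab \<and> coprime (fst ab) (snd ab) \<and> squarefree (snd ab)
          \<and> x \<in> arith_prog (fst ab) (snd ab) \<and> arith_prog (fst ab) (snd ab) \<subseteq> U x"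
      using \<open>x \<in> S\<close> \<open>S \<subseteq> U x\<close> by (intro exI[of _ "(a,b)"]) simp
  qed
  then obtain f where f: "\<forall>x\<in>E. 0 < fst (f x) \<and> 0 < snd (f x) \<and> coprime (fst (f x)) (snd (f x)) \<and> squarefree (snd (f x))
          \<and> x \<in> arith_prog (fst (f x)) (snd (f x)) \<and> arith_prog (fst (f x)) (snd (f x)) \<subseteq> U x"
    by (rule bchoice[THEN exE]) blast
  define P where "P = (\<Union>x\<in>E. prime_factors (snd (f x)))"
  have "finite P" unfolding P_def using assms(1) by simp
  moreover have "\<forall>p\<in>P. prime p" unfolding P_def by (auto simp: in_prime_factors_iff)
  moreover have "Sset E P \<subseteq> B"
  proof
    fix y assume y: "y \<in> Sset E P"
    have "y \<in> (\<Inter>x\<in>E. kirch_closure (U x))"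
    proof
      fix x assume x: "x \<in> E"
      let ?a = "fst (f x)" and ?b = "snd (f x)"
      have fx: "0 < ?a" "0 < ?b" "coprime ?a ?b" "squarefree ?b" "x \<in> arith_prog ?a ?b"
        "arith_prog ?a ?b \<subseteq> U x" using f x by auto
      obtain n where xn: "x = ?a + ?b * n" using fx(5) by (auto simp: arith_prog_def)
      have "y \<in> kirch_closure (arith_prog ?a ?b)"
      proof (rule closC[OF fx(1-4)])
        show "0 < y" using y by (simp add: Sset_def)
        fix p assume p: "prime p" "p dvd ?b"
        then have "p \<in> P" unfolding P_def using x fx(2) by (auto simp: in_prime_factors_iff)
        then have "tp E p y" using y by (simp add: Sset_def)
        then have t: "p dvd x \<or> p dvd y \<or> y mod p = x mod p" using x by (simp add: tp_def)
        from xn have "x mod p = (?a + ?b * n) mod p" by (rule arg_cong[where f="\<lambda>t. t mod p"])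
        then have xa: "x mod p = ?a mod p" using mod_lin[OF p(2)] by simp
        have "\<not> p dvd x"
        proof
          assume "p dvd x"
          then have "p dvd ?a" using xa by (simp add: dvd_eq_mod_eq_0)
          then show False using p fx(3) by (metis coprime_common_divisor not_prime_unit)
        qed
        then show "p dvd y \<or> y mod p = ?a mod p" using t xa by simp
      qed
      then show "y \<in> kirch_closure (U x)" using closure_mono[OF fx(6)] by blast
    qed
    moreover have "0 < y" using y by (simp add: Sset_def)
    ultimately show "y \<in> B" using sub by blast
  qed
  ultimately show "B \<subseteq> {0<..} \<and> (\<exists>P. finite P \<and> (\<forall>p\<in>P. prime p) \<and> Sset E P \<subseteq> B)" using B0 by blast
next
  assume "B \<subseteq> {0<..} \<and> (\<exists>P. finite P \<and> (\<forall>p\<in>P. prime p) \<and> Sset E P \<subseteq> B)"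
  then obtain P where B0: "B \<subseteq> {0<..}" and P: "finite P" "\<forall>p\<in>P. prime p" "Sset E P \<subseteq> B" by blast
  define bb where "bb x = \<Prod>{p\<in>P. \<not> p dvd x}" for x
  define U where "U x = arith_prog x (bb x)" for x
  have bpos: "0 < bb x" for x unfolding bb_def using P by (auto intro!: prod_pos simp: prime_gt_0_nat)
  have bsq: "squarefree (bb x)" for x unfolding bb_def using P by (intro sqf_prod_primes) auto
  have bcop: "coprime x (bb x)" for x unfolding bb_def using P
    by (intro prod_coprime_right) (metis (mono_tags, lifting) coprime_commute mem_Collect_eq prime_imp_coprime)
  have "\<forall>x\<in>E. kirch_open (U x) \<and> x \<in> U x"
  proof
    fix x assume "x \<in> E"
    then have "0 < x" using assms by auto
    then show "kirch_open (U x) \<and> x \<in> U x" unfolding U_def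
      using basic_open bpos bsq bcop by (auto simp: arith_prog_def)
  qed
  moreover have "{0<..} \<inter> (\<Inter>x\<in>E. kirch_closure (U x)) \<subseteq> B"
  proof
    fix y assume y: "y \<in> {0<..} \<inter> (\<Inter>x\<in>E. kirch_closure (U x))"
    have "y \<in> Sset E P" unfolding Sset_def tp_def
    proof (intro CollectI conjI ballI)
      show "0 < y" using y by simp
      fix p x assume p: "p \<in> P" and x: "x \<in> E"
      show "p dvd x \<or> p dvd y \<or> y mod p = x mod p"
      proof (cases "p dvd x \<or> p dvd y")
        case False
        then have "p dvd bb x" unfolding bb_def using p P(1) by (intro dvd_prodI) auto
        then show ?thesis using closD[of y x "bb x" p] y x P(2) p False unfolding U_def by auto
      qed blast
    qed
    then show "y \<in> B" using P(3) by blast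
  qed
  ultimately show "B \<in> filt E" unfolding filt_def using B0 by blast
qed


lemma filt_charD:
  assumes "finite E" "E \<subseteq> {0<..}" "B \<in> filt E"
  obtains P where "B \<subseteq> {0<..}" "finite P" "\<forall>p\<in>P. prime p" "Sset E P \<subseteq> B"
proof -
  have "B \<subseteq> {0<..} \<and> (\<exists>P. finite P \<and> (\<forall>p\<in>P. prime p) \<and> Sset E P \<subseteq> B)"
    using filt_char[OF assms(1,2), THEN iffD1, OF assms(3)] .
  then show ?thesis using that by blast
qed

lemma filt_charI:
  assumes "finite E" "E \<subseteq> {0<..}" "B \<subseteq> {0<..}" "finite P" "\<forall>p\<in>P. prime p" "Sset E P \<subseteq> B"
  shows "B \<in> filt E"
proof -
  have "B \<subseteq> {0<..} \<and> (\<exists>P. finite P \<and> (\<forall>p\<in>P. prime p) \<and> Sset E P \<subseteq> B)"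
    using assms(3-6) by blast
  then show ?thesis using filt_char[OF assms(1,2), THEN iffD2] by blast
qed

lemma tp_mod: "y mod p = y' mod p \<Longrightarrow> tp E p y \<longleftrightarrow> tp E p y'"
  unfolding tp_def dvd_eq_mod_eq_0 by simp

lemma tp_dvd: "p dvd y \<Longrightarrow> tp E p y"
  unfolding tp_def by blast

lemma tp_two: "tp E 2 y"
  unfolding tp_def by (auto simp: odd_iff_mod_2_eq_one)

lemma tp_12: "prime p \<Longrightarrow> tp {1,2} p y \<longleftrightarrow> (p = 2 \<or> p dvd y)"
proof
  assume p: "prime p" and t: "tp {1,2} p y"
  show "p = 2 \<or> p dvd y"
  proof (rule ccontr)
    assume "\<not> (p = 2 \<or> p dvd y)"
    then have "p \<noteq> 2" "\<not> p dvd y" by auto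
    then have "2 < p" using prime_ge_2_nat[OF p] by linarith
    then have "\<not> p dvd 1" "\<not> p dvd 2" using p by (auto dest: dvd_imp_le)
    then have "y mod p = 1 mod p" "y mod p = 2 mod p" using t \<open>\<not> p dvd y\<close> unfolding tp_def by auto
    then show False using \<open>2 < p\<close> by simp
  qed
next
  assume "prime p" "p = 2 \<or> p dvd y"
  then show "tp {1,2} p y" using tp_two tp_dvd by blast
qed

lemma filt_le:
  assumes "finite E" "E \<subseteq> {0<..}" "finite E'" "E' \<subseteq> {0<..}"
  shows "filt E \<subseteq> filt E' \<longleftrightarrow> (\<forall>p y. prime p \<longrightarrow> tp E' p y \<longrightarrow> tp E p y)"
proof
  assume le: "filt E \<subseteq> filt E'"
  show "\<forall>p y. prime p \<longrightarrow> tp E' p y \<longrightarrow> tp E p y"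
  proof (intro allI impI)
    fix p y assume p: "prime p" and t: "tp E' p y"
    have "Sset E {p} \<in> filt E" using p by (intro filt_charI[OF assms(1,2), of _ "{p}"]) (auto simp: Sset_def)
    then have "Sset E {p} \<in> filt E'" using le by blast
    then obtain P where P: "finite P" "\<forall>q\<in>P. prime q" "Sset E' P \<subseteq> Sset E {p}"
      by (rule filt_charD[OF assms(3,4)])
    define Q where "Q = \<Prod>(P - {p})"
    have Q0: "0 < Q" unfolding Q_def using P by (auto intro!: prod_pos simp: prime_gt_0_nat)
    have "coprime Q p" unfolding Q_def using P p
      by (intro prod_coprime_left primes_coprime) auto
    then have "gcd Q p = 1" by simp
    then obtain w k where wk: "Q * w = p * k + 1" using bezout_nat[of Q p] Q0 by auto
    define y' where "y' = Q * (w * y) + Q * p"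
    have w': "(Q*w) mod p = 1 mod p" unfolding wk using mod_lin[of p p 1 k] by (simp add: add.commute)
    have "y' mod p = (Q * w * y) mod p" unfolding y'_def by (simp add: mult.assoc)
    also have "\<dots> = ((Q*w) mod p * y) mod p" by (simp add: mod_mult_left_eq)
    also have "\<dots> = (1 mod p * y) mod p" using w' by simp
    also have "\<dots> = y mod p" by (simp add: mod_mult_left_eq)
    finally have ym: "y' mod p = y mod p" .
    have "y' \<in> Sset E' P" unfolding Sset_def
    proof (intro CollectI conjI ballI)
      show "0 < y'" unfolding y'_def using Q0 prime_gt_0_nat[OF p] by simp
      fix q assume q: "q \<in> P"
      show "tp E' q y'"
      proof (cases "q = p")
        case True then show ?thesis using tp_mod[OF ym] t by simp
      next
        case False
        then have "q dvd Q" unfolding Q_def using q P(1) by (intro dvd_prodI) auto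
        then have "q dvd y'" unfolding y'_def by simp
        then show ?thesis by (rule tp_dvd)
      qed
    qed
    then have "tp E p y'" using P(3) by (auto simp: Sset_def)
    then show "tp E p y" using tp_mod[OF ym] by simp
  qed
next
  assume H: "\<forall>p y. prime p \<longrightarrow> tp E' p y \<longrightarrow> tp E p y"
  show "filt E \<subseteq> filt E'"
  proof
    fix B assume "B \<in> filt E"
    then obtain P where P: "B \<subseteq> {0<..}" "finite P" "\<forall>q\<in>P. prime q" "Sset E P \<subseteq> B"
      by (rule filt_charD[OF assms(1,2)])
    have "Sset E' P \<subseteq> Sset E P" using H P(3) by (auto simp: Sset_def)
    then show "B \<in> filt E'" using P by (intro filt_charI[OF assms(3,4), of _ P]) auto
  qed
qed

lemma filt_inf_eq: "filt_inf = filt {1,2}"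
proof
  have fin: "finite {1::nat,2}" "{1::nat,2} \<subseteq> {0<..}" by auto
  show "filt_inf \<subseteq> filt {1,2}"
  proof
    fix B assume "B \<in> filt_inf"
    then obtain UU where B0: "B \<subseteq> {0<..}" and UU: "finite UU" "UU \<noteq> {}"
      "\<forall>U\<in>UU. kirch_open U \<and> U \<noteq> {}" "(\<Inter>U\<in>UU. kirch_closure U) \<subseteq> B"
      unfolding filt_inf_def by blast
    have "\<forall>U\<in>UU. \<exists>ab. 0 < fst ab \<and> 0 < snd ab \<and> coprime (fst ab) (snd ab) \<and> squarefree (snd ab)
          \<and> arith_prog (fst ab) (snd ab) \<subseteq> U"
    proof
      fix U assume "U \<in> UU"
      then obtain x where "x \<in> U" "kirch_open U" using UU(3) by blast
      then obtain S where "kirch_basic S" "S \<subseteq> U" unfolding kirch_open_def by blast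
      then obtain a b where "0 < a" "0 < b" "coprime a b" "squarefree b" "S = arith_prog a b"
        unfolding kirch_basic_def by blast
      then show "\<exists>ab. 0 < fst ab \<and> 0 < snd ab \<and> coprime (fst ab) (snd ab) \<and> squarefree (snd ab)
          \<and> arith_prog (fst ab) (snd ab) \<subseteq> U"
        using \<open>S \<subseteq> U\<close> by (intro exI[of _ "(a,b)"]) simp
    qed
    then obtain f where f: "\<forall>U\<in>UU. 0 < fst (f U) \<and> 0 < snd (f U) \<and> coprime (fst (f U)) (snd (f U)) \<and> squarefree (snd (f U))
          \<and> arith_prog (fst (f U)) (snd (f U)) \<subseteq> U"
      by (rule bchoice[THEN exE]) blast
    define P where "P = (\<Union>U\<in>UU. prime_factors (snd (f U)))"
    have "finite P" unfolding P_def using UU(1) by simp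
    moreover have "\<forall>p\<in>P. prime p" unfolding P_def by (auto simp: in_prime_factors_iff)
    moreover have "Sset {1,2} P \<subseteq> B"
    proof
      fix y assume y: "y \<in> Sset {1,2} P"
      have "y \<in> (\<Inter>U\<in>UU. kirch_closure U)"
      proof
        fix U assume U: "U \<in> UU"
        let ?a = "fst (f U)" and ?b = "snd (f U)"
        have fU: "0 < ?a" "0 < ?b" "coprime ?a ?b" "squarefree ?b"
          "arith_prog ?a ?b \<subseteq> U" using f U by auto
        have "y \<in> kirch_closure (arith_prog ?a ?b)"
        proof (rule closC[OF fU(1-4)])
          show "0 < y" using y by (simp add: Sset_def)
          fix p assume p: "prime p" "p dvd ?b"
          then have "p \<in> P" unfolding P_def using U fU(2) by (auto simp: in_prime_factors_iff)
          then have "tp {1,2} p y" using y by (simp add: Sset_def)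
          then have t: "p = 2 \<or> p dvd y" using tp_12[OF p(1)] by blast
          show "p dvd y \<or> y mod p = ?a mod p"
          proof (cases "p dvd y")
            case False
            then have "p = 2" using t by blast
            have "\<not> 2 dvd ?a"
            proof
              assume "2 dvd ?a"
              then have "is_unit (2::nat)" using coprime_common_divisor[OF fU(3)] p(2) \<open>p = 2\<close> by blast
              then show False by simp
            qed
            then have "odd ?a" by simp
            then show ?thesis using False \<open>p = 2\<close> by (simp add: odd_iff_mod_2_eq_one)
          qed blast
        qed
        then show "y \<in> kirch_closure U" using closure_mono[OF fU(5)] by blast
      qed
      then show "y \<in> B" using UU(4) by blast
    qed
    ultimately show "B \<in> filt {1,2}" using B0 by (intro filt_charI[OF fin, of _ P]) auto
  qed
  show "filt {1,2} \<subseteq> filt_inf"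
  proof
    fix B assume "B \<in> filt {1,2}"
    then obtain P where P: "B \<subseteq> {0<..}" "finite P" "\<forall>q\<in>P. prime q" "Sset {1,2} P \<subseteq> B"
      by (rule filt_charD[OF fin])
    define P' where "P' = P - {2}"
    define UU where "UU = {arith_prog 1 1} \<union> (\<lambda>p. arith_prog 1 p) ` P' \<union> (\<lambda>p. arith_prog 2 p) ` P'"
    have P'p: "prime p" "p \<noteq> 2" "odd p" if "p \<in> P'" for p
      using that P(3) unfolding P'_def by (auto dest: primes_dvd_imp_eq[OF two_is_prime_nat])
    have "finite UU" unfolding UU_def P'_def using P(2) by simp
    moreover have "UU \<noteq> {}" unfolding UU_def by simp
    moreover have "\<forall>U\<in>UU. kirch_open U \<and> U \<noteq> {}"
    proof
      fix U assume U: "U \<in> UU"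
      have c: "U = arith_prog 1 1 \<or> (\<exists>p\<in>P'. U = arith_prog 1 p) \<or> (\<exists>p\<in>P'. U = arith_prog 2 p)"
        using U unfolding UU_def by blast
      have "kirch_open (arith_prog 1 1) \<and> arith_prog 1 1 \<noteq> {}"
        using basic_open[of 1 1] by (auto simp: arith_prog_def)
      moreover have "kirch_open (arith_prog 1 p) \<and> arith_prog 1 p \<noteq> {}" if "p \<in> P'" for p
        using basic_open[of 1 p] P'p[OF that] squarefree_prime prime_gt_0_nat by (auto simp: arith_prog_def)
      moreover have "kirch_open (arith_prog 2 p) \<and> arith_prog 2 p \<noteq> {}" if "p \<in> P'" for p
      proof -
        have "coprime 2 p" using P'p[OF that] primes_coprime[OF two_is_prime_nat, of p] by auto
        then show ?thesis
          using basic_open[of 2 p] P'p[OF that] squarefree_prime prime_gt_0_nat by (auto simp: arith_prog_def)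
      qed
      ultimately show "kirch_open U \<and> U \<noteq> {}" using c by metis
    qed
    moreover have "(\<Inter>U\<in>UU. kirch_closure U) \<subseteq> B"
    proof
      fix y assume y: "y \<in> (\<Inter>U\<in>UU. kirch_closure U)"
      have "y \<in> Sset {1,2} P" unfolding Sset_def
      proof (intro CollectI conjI ballI)
        have "arith_prog 1 1 \<in> UU" unfolding UU_def by simp
        then have "y \<in> kirch_closure (arith_prog 1 1)" using y by blast
        then show "0 < y" using closure_pos by blast
        fix p assume p: "p \<in> P"
        show "tp {1,2} p y"
        proof (cases "p = 2")
          case False
          then have pP: "p \<in> P'" using p unfolding P'_def by simp
          have "p dvd y"
          proof (rule ccontr)
            assume nd: "\<not> p dvd y"
            have "2 \<le> p" using prime_ge_2_nat P'p(1)[OF pP] by blast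
            then have "2 < p" using P'p(2)[OF pP] by linarith
            then have m12: "1 mod p = 1" "2 mod p = (2::nat)" by simp_all
            have "arith_prog 1 p \<in> UU" "arith_prog 2 p \<in> UU" unfolding UU_def using pP by blast+
            then have "y \<in> kirch_closure (arith_prog 1 p)" "y \<in> kirch_closure (arith_prog 2 p)"
              using y by blast+
            then have "y mod p = 1 mod p" "y mod p = 2 mod p"
              using closD[OF _ P'p(1)[OF pP] dvd_refl nd] by blast+
            then show False using m12 by simp
          qed
          then show ?thesis by (rule tp_dvd)
        qed (simp add: tp_two)
      qed
      then show "y \<in> B" using P(4) by blast
    qed
    ultimately show "B \<in> filt_inf" unfolding filt_inf_def using P(1) by blast
  qed
qed

definition nz :: "nat set \<Rightarrow> nat \<Rightarrow> bool" where
  "nz E p \<longleftrightarrow> (\<exists>y. tp E p y \<and> \<not> p dvd y)"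

definition full :: "nat set \<Rightarrow> nat \<Rightarrow> bool" where
  "full E p \<longleftrightarrow> (\<forall>y. tp E p y)"

definition W :: "nat \<Rightarrow> nat \<Rightarrow> nat set" where
  "W x0 m = {x0, x0 + m, x0 + 2*m}"

lemma prime_dvd2: "prime (p::nat) \<Longrightarrow> p dvd 2 \<Longrightarrow> p = 2"
  using primes_dvd_imp_eq two_is_prime_nat by blast

lemma odd_prime_iff: "prime (p::nat) \<Longrightarrow> odd p \<longleftrightarrow> p \<noteq> 2"
  using primes_dvd_imp_eq[OF two_is_prime_nat, of p] by auto

lemma full_iff:
  assumes "prime p" "p \<noteq> 2"
  shows "full E p \<longleftrightarrow> (\<forall>x\<in>E. p dvd x)"
proof
  assume f: "full E p"
  show "\<forall>x\<in>E. p dvd x"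
  proof (rule ccontr)
    assume "\<not> (\<forall>x\<in>E. p dvd x)"
    then obtain x where x: "x \<in> E" "\<not> p dvd x" by blast
    have "tp E p (2*x)" using f unfolding full_def by blast
    then have h: "p dvd 2*x \<or> (2*x) mod p = x mod p" using x unfolding tp_def by blast
    have "\<not> p dvd 2*x" using x assms prime_dvd2 prime_dvd_mult_iff by blast
    then have "(2*x) mod p = x mod p" using h by blast
    then have "p dvd 2*x - x" using mod_eq_dvd_iff_nat[of x "2*x" p] by simp
    then show False using x by simp
  qed
next
  assume "\<forall>x\<in>E. p dvd x"
  then show "full E p" unfolding full_def tp_def by blast
qed

lemma full_nz: "prime p \<Longrightarrow> full E p \<Longrightarrow> nz E p"
  unfolding full_def nz_def using not_prime_unit by (metis dvd_1_iff_1 prime_nat_iff)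

lemma nz_two: "nz E 2"
  unfolding nz_def using tp_two[of E 1] by auto

lemma nonfull_eq: "x \<in> E \<Longrightarrow> \<not> p dvd x \<Longrightarrow> tp E p y \<Longrightarrow> \<not> p dvd y \<Longrightarrow> y mod p = x mod p"
  unfolding tp_def by blast

lemma W_pos: "0 < x0 \<Longrightarrow> finite (W x0 m) \<and> W x0 m \<subseteq> {0<..}"
  unfolding W_def by auto

lemma W_same:
  assumes "p dvd m"
  shows "tp (W x0 m) p y \<longleftrightarrow> (p dvd x0 \<or> p dvd y \<or> y mod p = x0 mod p)"
proof -
  have e1: "(x0 + m) mod p = x0 mod p" using mod_lin[OF assms, of x0 1] by simp
  have e2: "(x0 + 2*m) mod p = x0 mod p" using mod_lin[of p "2*m" x0 1] assms by simp
  have d1: "p dvd (x0 + m) \<longleftrightarrow> p dvd x0" using e1 by (simp add: dvd_eq_mod_eq_0)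
  have d2: "p dvd (x0 + 2*m) \<longleftrightarrow> p dvd x0" using e2 by (simp add: dvd_eq_mod_eq_0)
  show ?thesis unfolding W_def tp_def using e1 e2 d1 d2 by auto
qed

lemma W_other:
  assumes q: "prime q" "q \<noteq> 2" "\<not> q dvd m" and t: "tp (W x0 m) q y"
  shows "q dvd y"
proof (rule ccontr)
  assume ny: "\<not> q dvd y"
  have c: "e mod q = 0 \<or> e mod q = y mod q" if "e \<in> W x0 m" for e
    using t that ny unfolding tp_def by (auto simp: dvd_eq_mod_eq_0)
  have n2: "\<not> q dvd 2*m" using q prime_dvd2 prime_dvd_mult_iff by blast
  have a1: "(x0 + m) mod q \<noteq> x0 mod q"
  proof
    assume "(x0 + m) mod q = x0 mod q"
    then have "q dvd (x0+m) - x0" using mod_eq_dvd_iff_nat[of x0 "x0+m" q] by simp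
    then show False using q by simp
  qed
  have a2: "(x0 + 2*m) mod q \<noteq> x0 mod q"
  proof
    assume "(x0 + 2*m) mod q = x0 mod q"
    then have "q dvd (x0+2*m) - x0" using mod_eq_dvd_iff_nat[of x0 "x0+2*m" q] by simp
    then show False using n2 by simp
  qed
  have a3: "(x0 + 2*m) mod q \<noteq> (x0 + m) mod q"
  proof
    assume "(x0 + 2*m) mod q = (x0+m) mod q"
    then have "q dvd (x0+2*m) - (x0+m)" using mod_eq_dvd_iff_nat[of "x0+m" "x0+2*m" q] by simp
    then show False using q by simp
  qed
  have "x0 mod q = 0 \<or> x0 mod q = y mod q" "(x0+m) mod q = 0 \<or> (x0+m) mod q = y mod q"
    "(x0+2*m) mod q = 0 \<or> (x0+2*m) mod q = y mod q" using c unfolding W_def by auto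
  then show False using a1 a2 a3 by auto
qed

lemma same_p:
  assumes "prime p" "p \<noteq> 2" "\<not> full E p" "\<forall>y. tp E' p y \<longrightarrow> tp E p y" "nz E' p" "tp E p y"
  shows "tp E' p y"
proof (cases "p dvd y")
  case True then show ?thesis by (rule tp_dvd)
next
  case False
  obtain x where x: "x \<in> E" "\<not> p dvd x" using assms(3) full_iff[OF assms(1,2)] by blast
  obtain y1 where y1: "tp E' p y1" "\<not> p dvd y1" using assms(5) unfolding nz_def by blast
  have "y mod p = x mod p" using nonfull_eq[OF x assms(6) False] .
  moreover have "y1 mod p = x mod p" using nonfull_eq[OF x _ y1(2)] assms(4) y1(1) by blast
  ultimately show ?thesis using tp_mod[of y p y1] y1(1) by simp
qed

lemma top_iff:
  assumes "finite E" "E \<subseteq> {0<..}"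
  shows "filt E = filt_inf \<longleftrightarrow> \<not> (\<exists>p. prime p \<and> p \<noteq> 2 \<and> nz E p)"
proof -
  have fin: "finite {1::nat,2}" "{1::nat,2} \<subseteq> {0<..}" by auto
  have le1: "filt E \<subseteq> filt {1,2}"
    unfolding filt_le[OF assms fin] using tp_12 tp_two tp_dvd by metis
  have "filt {1,2} \<subseteq> filt E \<longleftrightarrow> (\<forall>p y. prime p \<longrightarrow> tp E p y \<longrightarrow> tp {1,2} p y)"
    by (rule filt_le[OF fin assms])
  also have "\<dots> \<longleftrightarrow> \<not> (\<exists>p. prime p \<and> p \<noteq> 2 \<and> nz E p)"
    unfolding nz_def using tp_12 by blast
  finally show ?thesis using le1 filt_inf_eq by blast
qed

lemma fam_iff: "G \<in> filt_family \<longleftrightarrow> (\<exists>E. finite E \<and> E \<subseteq> {0<..} \<and> G = filt E) \<or> G = filt_inf"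
  unfolding filt_family_def by blast

lemma fam_minus:
  "G \<in> filt_family - {filt_inf} \<longleftrightarrow> (\<exists>E'. finite E' \<and> E' \<subseteq> {0<..} \<and> G = filt E' \<and> G \<noteq> filt_inf)"
  using fam_iff[of G] by auto

lemma fam_minus2:
  "G \<in> filt_family - (F1 \<union> {filt_inf}) \<longleftrightarrow>
     (\<exists>E'. finite E' \<and> E' \<subseteq> {0<..} \<and> G = filt E' \<and> G \<notin> F1 \<and> G \<noteq> filt_inf)"
  using fam_iff[of G] by auto

lemma F1_mem:
  assumes "finite E" "E \<subseteq> {0<..}"
  shows "filt E \<in> F1 \<longleftrightarrow> filt E \<noteq> filt_inf \<and>
     (\<forall>E'. finite E' \<and> E' \<subseteq> {0<..} \<and> filt E' \<noteq> filt_inf \<and> filt E \<subseteq> filt E' \<longrightarrow> filt E' = filt E)"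
proof -
  have "filt E \<in> F1 \<longleftrightarrow> filt E \<in> filt_family - {filt_inf} \<and>
      (\<forall>G. G \<in> filt_family - {filt_inf} \<longrightarrow> filt E \<subseteq> G \<longrightarrow> G = filt E)"
    unfolding F1_def maximals_def by (simp only: mem_Collect_eq Ball_def)
  also have "\<dots> \<longleftrightarrow> filt E \<noteq> filt_inf \<and>
     (\<forall>E'. finite E' \<and> E' \<subseteq> {0<..} \<and> filt E' \<noteq> filt_inf \<and> filt E \<subseteq> filt E' \<longrightarrow> filt E' = filt E)"
    unfolding fam_minus using assms by auto
  finally show ?thesis .
qed

lemma F2_mem:
  assumes "finite E" "E \<subseteq> {0<..}"
  shows "filt E \<in> F2 \<longleftrightarrow> filt E \<notin> F1 \<and> filt E \<noteq> filt_inf \<and>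
     (\<forall>E'. finite E' \<and> E' \<subseteq> {0<..} \<and> filt E' \<notin> F1 \<and> filt E' \<noteq> filt_inf \<and> filt E \<subseteq> filt E' \<longrightarrow> filt E' = filt E)"
proof -
  have "filt E \<in> F2 \<longleftrightarrow> filt E \<in> filt_family - (F1 \<union> {filt_inf}) \<and>
      (\<forall>G. G \<in> filt_family - (F1 \<union> {filt_inf}) \<longrightarrow> filt E \<subseteq> G \<longrightarrow> G = filt E)"
    unfolding F2_def maximals_def by (simp only: mem_Collect_eq Ball_def)
  also have "\<dots> \<longleftrightarrow> filt E \<notin> F1 \<and> filt E \<noteq> filt_inf \<and>
     (\<forall>E'. finite E' \<and> E' \<subseteq> {0<..} \<and> filt E' \<notin> F1 \<and> filt E' \<noteq> filt_inf \<and> filt E \<subseteq> filt E' \<longrightarrow> filt E' = filt E)"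
    unfolding fam_minus2 using assms by auto
  finally show ?thesis .
qed

definition C1 :: "nat set \<Rightarrow> bool" where
  "C1 E \<longleftrightarrow> (\<exists>p. prime p \<and> p \<noteq> 2 \<and> nz E p \<and> \<not> full E p \<and> (\<forall>q. prime q \<and> q \<noteq> 2 \<and> nz E q \<longrightarrow> q = p))"

lemma F1_iff:
  assumes E: "finite E" "E \<subseteq> {0<..}"
  shows "filt E \<in> F1 \<longleftrightarrow> C1 E"
proof
  assume F: "filt E \<in> F1"
  then have ntop: "filt E \<noteq> filt_inf" and mx: "\<And>E'. finite E' \<Longrightarrow> E' \<subseteq> {0<..} \<Longrightarrow> filt E' \<noteq> filt_inf \<Longrightarrow> filt E \<subseteq> filt E' \<Longrightarrow> filt E' = filt E"
    using F1_mem[OF E] by blast+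
  obtain p where p: "prime p" "p \<noteq> 2" "nz E p" using ntop top_iff[OF E] by blast
  obtain y0 where y0: "tp E p y0" "\<not> p dvd y0" using p(3) unfolding nz_def by blast
  have y00: "0 < y0" using y0(2) by (cases y0) auto
  define V where "V = W y0 p"
  have Vp: "finite V" "V \<subseteq> {0<..}" unfolding V_def using W_pos[OF y00] by auto
  have Vsame: "tp V p y \<longleftrightarrow> (p dvd y \<or> y mod p = y0 mod p)" for y
    unfolding V_def using W_same[of p p y0 y] y0(2) by auto
  have Voth: "q dvd y" if "prime q" "q \<noteq> 2" "q \<noteq> p" "tp V q y" for q y
    using W_other[OF that(1,2) _ that(4)[unfolded V_def]] primes_dvd_imp_eq[OF that(1) p(1)] that(3) by blast
  have le: "filt E \<subseteq> filt V"
    unfolding filt_le[OF E Vp]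
  proof (intro allI impI)
    fix q y assume q: "prime q" "tp V q y"
    show "tp E q y"
    proof (cases "q = p")
      case True
      then show ?thesis using q(2) Vsame tp_dvd tp_mod[of y p y0] y0(1) by auto
    next
      case False
      then show ?thesis using Voth[OF q(1) _ False q(2)] tp_dvd tp_two by (cases "q = 2") auto
    qed
  qed
  have "nz V p" unfolding nz_def using Vsame[of y0] y0(2) by blast
  then have "filt V \<noteq> filt_inf" using top_iff[OF Vp] p by blast
  then have eq: "filt V = filt E" using mx[OF Vp] le by blast
  then have ge: "\<And>q y. prime q \<Longrightarrow> tp E q y \<Longrightarrow> tp V q y" using filt_le[OF Vp E] by blast
  have "\<not> full E p"
  proof
    assume "full E p"
    then have "tp V p (2*y0)" using ge p(1) unfolding full_def by blast
    then have h: "p dvd 2*y0 \<or> (2*y0) mod p = y0 mod p" using Vsame by blast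
    have "\<not> p dvd 2*y0" using y0(2) p prime_dvd2 prime_dvd_mult_iff by blast
    then have "(2*y0) mod p = y0 mod p" using h by blast
    then have "p dvd 2*y0 - y0" using mod_eq_dvd_iff_nat[of y0 "2*y0" p] by simp
    then show False using y0(2) by simp
  qed
  moreover have "q = p" if qq: "prime q" "q \<noteq> 2" "nz E q" for q
  proof (rule ccontr)
    assume "q \<noteq> p"
    obtain y where "tp E q y" "\<not> q dvd y" using qq(3) unfolding nz_def by blast
    then show False using ge[OF qq(1)] Voth[OF qq(1,2) \<open>q \<noteq> p\<close>] by blast
  qed
  ultimately show "C1 E" unfolding C1_def using p by blast
next
  assume "C1 E"
  then obtain p where p: "prime p" "p \<noteq> 2" "nz E p" "\<not> full E p"
    and u: "\<And>q. prime q \<Longrightarrow> q \<noteq> 2 \<Longrightarrow> nz E q \<Longrightarrow> q = p" unfolding C1_def by blast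
  have "filt E \<noteq> filt_inf" using top_iff[OF E] p by blast
  moreover have "filt E' = filt E" if E': "finite E'" "E' \<subseteq> {0<..}" "filt E' \<noteq> filt_inf" "filt E \<subseteq> filt E'" for E'
  proof -
    have le: "\<And>q y. prime q \<Longrightarrow> tp E' q y \<Longrightarrow> tp E q y" using filt_le[OF E E'(1,2)] E'(4) by blast
    obtain r where r: "prime r" "r \<noteq> 2" "nz E' r" using E'(3) top_iff[OF E'(1,2)] by blast
    have "nz E r" using r(3) le[OF r(1)] unfolding nz_def by blast
    then have "r = p" using u r by blast
    have "filt E' \<subseteq> filt E" unfolding filt_le[OF E'(1,2) E]
    proof (intro allI impI)
      fix q y assume q: "prime q" "tp E q y"
      show "tp E' q y"
      proof (cases "q = 2")
        case True then show ?thesis using tp_two by simp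
      next
        case q2: False
        show ?thesis
        proof (cases "q = p")
          case True
          have tq: "tp E p y" using q(2) True by simp
          have "\<forall>y. tp E' p y \<longrightarrow> tp E p y" using le p(1) by blast
          then have "tp E' p y" using same_p[OF p(1,2,4) _ _ tq] r(3) \<open>r = p\<close> by blast
          then show ?thesis using True by simp
        next
          case False
          then have "\<not> nz E q" using u q(1) q2 by blast
          then have "q dvd y" using q(2) unfolding nz_def by blast
          then show ?thesis by (rule tp_dvd)
        qed
      qed
    qed
    then show ?thesis using E'(4) by blast
  qed
  ultimately show "filt E \<in> F1" using F1_mem[OF E] by blast
qed

definition CA :: "nat set \<Rightarrow> bool" where
  "CA E \<longleftrightarrow> (\<exists>p. prime p \<and> p \<noteq> 2 \<and> full E p \<and> (\<forall>q. prime q \<and> q \<noteq> 2 \<and> nz E q \<longrightarrow> q = p))"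

definition CB :: "nat set \<Rightarrow> bool" where
  "CB E \<longleftrightarrow> (\<exists>p q. prime p \<and> prime q \<and> p \<noteq> 2 \<and> q \<noteq> 2 \<and> p \<noteq> q \<and> nz E p \<and> nz E q \<and>
      (\<forall>l. prime l \<and> l \<noteq> 2 \<and> nz E l \<longrightarrow> l = p \<or> l = q) \<and> (\<forall>l. prime l \<and> l \<noteq> 2 \<longrightarrow> \<not> full E l))"

lemma F2_imp:
  assumes E: "finite E" "E \<subseteq> {0<..}" and F: "filt E \<in> F2"
  shows "CA E \<or> CB E"
proof -
  have nF1: "filt E \<notin> F1" and ntop: "filt E \<noteq> filt_inf"
    and mx: "\<And>E'. finite E' \<Longrightarrow> E' \<subseteq> {0<..} \<Longrightarrow> filt E' \<notin> F1 \<Longrightarrow> filt E' \<noteq> filt_inf \<Longrightarrow> filt E \<subseteq> filt E' \<Longrightarrow> filt E' = filt E"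
    using F2_mem[OF E] F by blast+
  obtain p where p: "prime p" "p \<noteq> 2" "nz E p" using ntop top_iff[OF E] by blast
  have nC1: "\<not> C1 E" using nF1 F1_iff[OF E] by blast
  show ?thesis
  proof (cases "\<exists>p. prime p \<and> p \<noteq> 2 \<and> full E p")
    case True
    then obtain p where p: "prime p" "p \<noteq> 2" "full E p" by blast
    have p0: "0 < p" using prime_gt_0_nat[OF p(1)] .
    define V where "V = W p p"
    have Vp: "finite V" "V \<subseteq> {0<..}" unfolding V_def using W_pos[OF p0] by auto
    have Vsame: "tp V p y" for y
      unfolding V_def using W_same[of p p p y] by auto
    have Voth: "q dvd y" if "prime q" "q \<noteq> 2" "q \<noteq> p" "tp V q y" for q y
      using W_other[OF that(1,2) _ that(4)[unfolded V_def]] primes_dvd_imp_eq[OF that(1) p(1)] that(3) by blast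
    have le: "filt E \<subseteq> filt V"
      unfolding filt_le[OF E Vp]
    proof (intro allI impI)
      fix q y assume q: "prime q" "tp V q y"
      show "tp E q y"
      proof (cases "q = p")
        case True
        then show ?thesis using p(3) unfolding full_def by simp
      next
        case False
        then show ?thesis using Voth[OF q(1) _ False q(2)] tp_dvd tp_two by (cases "q = 2") auto
      qed
    qed
    have fV: "full V p" unfolding full_def using Vsame by blast
    have "nz V p" using full_nz[OF p(1) fV] .
    then have ntV: "filt V \<noteq> filt_inf" using top_iff[OF Vp] p by blast
    have "\<not> C1 V"
    proof
      assume "C1 V"
      then obtain p' where p': "prime p'" "p' \<noteq> 2" "nz V p'" "\<not> full V p'" unfolding C1_def by blast
      have "p' = p"
      proof (rule ccontr)
        assume "p' \<noteq> p"
        obtain y where "tp V p' y" "\<not> p' dvd y" using p'(3) unfolding nz_def by blast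
        then show False using Voth[OF p'(1,2) \<open>p' \<noteq> p\<close>] by blast
      qed
      then show False using p'(4) fV by simp
    qed
    then have "filt V \<notin> F1" using F1_iff[OF Vp] by blast
    then have eq: "filt V = filt E" using mx[OF Vp _ ntV le] by blast
    then have ge: "\<And>q y. prime q \<Longrightarrow> tp E q y \<Longrightarrow> tp V q y" using filt_le[OF Vp E] by blast
    have "q = p" if qq: "prime q" "q \<noteq> 2" "nz E q" for q
    proof (rule ccontr)
      assume "q \<noteq> p"
      obtain y where "tp E q y" "\<not> q dvd y" using qq(3) unfolding nz_def by blast
      then show False using ge[OF qq(1)] Voth[OF qq(1,2) \<open>q \<noteq> p\<close>] by blast
    qed
    then have "CA E" unfolding CA_def using p by blast
    then show ?thesis by blast
  next
    case False
    then have nf: "\<not> full E p" using p by blast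
    obtain q where q: "prime q" "q \<noteq> 2" "nz E q" "q \<noteq> p"
      using nC1 p nf unfolding C1_def by blast
    obtain y1 where y1: "tp E p y1" "\<not> p dvd y1" using p(3) unfolding nz_def by blast
    obtain y2 where y2: "tp E q y2" "\<not> q dvd y2" using q(3) unfolding nz_def by blast
    have y10: "0 < y1" using y1(2) by (cases y1) auto
    have "coprime p q" using primes_coprime[OF p(1) q(1)] q(4) by auto
    then have "gcd p q = 1" by simp
    then obtain z where z: "z \<in> arith_prog y1 p" "z \<in> arith_prog y2 q"
      using ap_inter[of p q y2 y1] prime_gt_0_nat[OF p(1)] prime_gt_0_nat[OF q(1)] by auto
    obtain n1 where zn1: "z = y1 + p * n1" using z(1) by (auto simp: arith_prog_def)
    obtain n2 where zn2: "z = y2 + q * n2" using z(2) by (auto simp: arith_prog_def)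
    have zp: "z mod p = y1 mod p" unfolding zn1 using mod_lin[of p p y1 n1] by simp
    have zq: "z mod q = y2 mod q" unfolding zn2 using mod_lin[of q q y2 n2] by simp
    have z0: "0 < z" using zn1 y10 by simp
    have npz: "\<not> p dvd z" using zp y1(2) by (simp add: dvd_eq_mod_eq_0)
    have nqz: "\<not> q dvd z" using zq y2(2) by (simp add: dvd_eq_mod_eq_0)
    define V where "V = W z (p*q)"
    have Vp: "finite V" "V \<subseteq> {0<..}" unfolding V_def using W_pos[OF z0] by auto
    have Vsp: "tp V p y \<longleftrightarrow> (p dvd y \<or> y mod p = z mod p)" for y
      unfolding V_def using W_same[of p "p*q" z y] npz by auto
    have Vsq: "tp V q y \<longleftrightarrow> (q dvd y \<or> y mod q = z mod q)" for y
      unfolding V_def using W_same[of q "p*q" z y] nqz by auto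
    have Voth: "l dvd y" if "prime l" "l \<noteq> 2" "l \<noteq> p" "l \<noteq> q" "tp V l y" for l y
    proof -
      have "\<not> l dvd p*q"
        using that primes_dvd_imp_eq[OF that(1) p(1)] primes_dvd_imp_eq[OF that(1) q(1)] prime_dvd_mult_iff by blast
      then show ?thesis using W_other[OF that(1,2) _ that(5)[unfolded V_def]] by blast
    qed
    have le: "filt E \<subseteq> filt V"
      unfolding filt_le[OF E Vp]
    proof (intro allI impI)
      fix l y assume l: "prime l" "tp V l y"
      show "tp E l y"
      proof -
        consider "l = p" | "l = q" | "l = 2" | "l \<noteq> p \<and> l \<noteq> q \<and> l \<noteq> 2" by blast
        then show ?thesis
        proof cases
          case 1
          then have "p dvd y \<or> y mod p = y1 mod p" using l(2) Vsp zp by simp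
          then show ?thesis using 1 tp_dvd tp_mod[of y p y1] y1(1) by auto
        next
          case 2
          then have "q dvd y \<or> y mod q = y2 mod q" using l(2) Vsq zq by simp
          then show ?thesis using 2 tp_dvd tp_mod[of y q y2] y2(1) by auto
        next
          case 3 then show ?thesis using tp_two by simp
        next
          case 4 then show ?thesis using Voth[OF l(1)] l(2) tp_dvd by blast
        qed
      qed
    qed
    have nVp: "nz V p" unfolding nz_def using Vsp[of z] npz by blast
    have nVq: "nz V q" unfolding nz_def using Vsq[of z] nqz by blast
    have ntV: "filt V \<noteq> filt_inf" using top_iff[OF Vp] p nVp by blast
    have "\<not> C1 V"
    proof
      assume "C1 V"
      then obtain p' where "\<forall>l. prime l \<and> l \<noteq> 2 \<and> nz V l \<longrightarrow> l = p'" unfolding C1_def by blast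
      then have "p = p'" "q = p'" using p q nVp nVq by blast+
      then show False using q(4) by simp
    qed
    then have "filt V \<notin> F1" using F1_iff[OF Vp] by blast
    then have eq: "filt V = filt E" using mx[OF Vp _ ntV le] by blast
    then have ge: "\<And>l y. prime l \<Longrightarrow> tp E l y \<Longrightarrow> tp V l y" using filt_le[OF Vp E] by blast
    have "l = p \<or> l = q" if ll: "prime l" "l \<noteq> 2" "nz E l" for l
    proof (rule ccontr)
      assume "\<not> (l = p \<or> l = q)"
      obtain y where "tp E l y" "\<not> l dvd y" using ll(3) unfolding nz_def by blast
      then show False using ge[OF ll(1)] Voth[OF ll(1,2)] \<open>\<not> (l = p \<or> l = q)\<close> by blast
    qed
    then have "CB E" unfolding CB_def using p q False by blast
    then show ?thesis by blast
  qed
qed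

lemma F2_if:
  assumes E: "finite E" "E \<subseteq> {0<..}" and C: "CA E \<or> CB E"
  shows "filt E \<in> F2"
proof -
  have nC1: "\<not> C1 E"
  proof
    assume "C1 E"
    then obtain p' where p': "prime p'" "p' \<noteq> 2" "nz E p'" "\<not> full E p'"
      and u: "\<forall>l. prime l \<and> l \<noteq> 2 \<and> nz E l \<longrightarrow> l = p'" unfolding C1_def by blast
    show False using C
    proof
      assume "CA E"
      then obtain p where p: "prime p" "p \<noteq> 2" "full E p" unfolding CA_def by blast
      then have "p = p'" using u full_nz by blast
      then show False using p p'(4) by simp
    next
      assume "CB E"
      then obtain p q where "prime p" "prime q" "p \<noteq> 2" "q \<noteq> 2" "p \<noteq> q" "nz E p" "nz E q"
        unfolding CB_def by blast
      then show False using u by blast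
    qed
  qed
  then have nF1: "filt E \<notin> F1" using F1_iff[OF E] by blast
  have ntop: "filt E \<noteq> filt_inf"
    using C top_iff[OF E] full_nz unfolding CA_def CB_def by blast
  have "filt E' = filt E" if E': "finite E'" "E' \<subseteq> {0<..}" "filt E' \<notin> F1" "filt E' \<noteq> filt_inf" "filt E \<subseteq> filt E'" for E'
  proof -
    have le: "\<And>q y. prime q \<Longrightarrow> tp E' q y \<Longrightarrow> tp E q y" using filt_le[OF E E'(1,2)] E'(5) by blast
    have nzE: "nz E l" if "prime l" "nz E' l" for l using that le unfolding nz_def by blast
    have fE: "full E l" if "prime l" "full E' l" for l using that le unfolding full_def by blast
    have nC1': "\<not> C1 E'" using E'(3) F1_iff[OF E'(1,2)] by blast
    obtain r where r: "prime r" "r \<noteq> 2" "nz E' r" using E'(4) top_iff[OF E'(1,2)] by blast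
    have "filt E' \<subseteq> filt E" unfolding filt_le[OF E'(1,2) E]
    proof (intro allI impI)
      fix l y assume l: "prime l" "tp E l y"
      show "tp E' l y" using C
      proof
        assume "CA E"
        then obtain p where p: "prime p" "p \<noteq> 2" "full E p" and u: "\<forall>q. prime q \<and> q \<noteq> 2 \<and> nz E q \<longrightarrow> q = p"
          unfolding CA_def by blast
        have "r = p" using u r nzE by blast
        have fp: "full E' p"
        proof (rule ccontr)
          assume "\<not> full E' p"
          then obtain q' where "prime q'" "q' \<noteq> 2" "nz E' q'" "q' \<noteq> p"
            using nC1' r \<open>r = p\<close> unfolding C1_def by blast
          then show False using u nzE by blast
        qed
        show "tp E' l y"
        proof (cases "l = p")
          case True then show ?thesis using fp unfolding full_def by simp
        next
          case False
          show ?thesis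
          proof (cases "l = 2")
            case True then show ?thesis using tp_two by simp
          next
            case l2: False
            then have "\<not> nz E l" using u l(1) False by blast
            then show ?thesis using l(2) tp_dvd unfolding nz_def by blast
          qed
        qed
      next
        assume "CB E"
        then obtain p q where pq: "prime p" "prime q" "p \<noteq> 2" "q \<noteq> 2" "p \<noteq> q" "nz E p" "nz E q"
          and u: "\<forall>l. prime l \<and> l \<noteq> 2 \<and> nz E l \<longrightarrow> l = p \<or> l = q"
          and nf: "\<forall>l. prime l \<and> l \<noteq> 2 \<longrightarrow> \<not> full E l"
          unfolding CB_def by blast
        have rpq: "r = p \<or> r = q" using u r nzE by blast
        have nfr: "\<not> full E' r" using nf fE r by blast
        obtain q' where q': "prime q'" "q' \<noteq> 2" "nz E' q'" "q' \<noteq> r"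
          using nC1' r nfr unfolding C1_def by blast
        have "q' = p \<or> q' = q" using u q' nzE by blast
        then have both: "nz E' p" "nz E' q" using rpq q' r pq(5) by auto
        show "tp E' l y"
        proof (cases "l = 2")
          case True then show ?thesis using tp_two by simp
        next
          case l2: False
          show ?thesis
          proof (cases "l = p \<or> l = q")
            case True
            have "\<not> full E l" using nf l(1) l2 by blast
            moreover have "\<forall>y. tp E' l y \<longrightarrow> tp E l y" using le l(1) by blast
            moreover have "nz E' l" using True both by blast
            ultimately show ?thesis using same_p[OF l(1) l2 _ _ _ l(2)] by blast
          next
            case False
            then have "\<not> nz E l" using u l(1) l2 by blast
            then show ?thesis using l(2) tp_dvd unfolding nz_def by blast
          qed
        qed
      qed
    qed
    then show ?thesis using E'(5) by blast
  qed
  then show ?thesis using F2_mem[OF E] nF1 ntop by blast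
qed

lemma PiE_iff:
  assumes "E \<noteq> {}" "E \<subseteq> {0<..}"
  shows "p \<in> Pi_E E \<longleftrightarrow> prime p \<and> (\<forall>x\<in>E. p dvd x)"
proof -
  have "p \<in> Pi_E E \<longleftrightarrow> (\<forall>z\<in>E. z \<noteq> 0 \<and> p dvd z \<and> prime p)"
    unfolding Pi_E_def by (simp add: in_prime_factors_iff)
  also have "\<dots> \<longleftrightarrow> prime p \<and> (\<forall>x\<in>E. p dvd x)" using assms by auto
  finally show ?thesis .
qed

lemma AE_iff: "p \<in> A_E E \<longleftrightarrow> prime p \<and> nz E p"
proof
  assume "p \<in> A_E E"
  then obtain k where p: "prime p" and k: "0 < k" "\<forall>z\<in>E. p dvd z \<or> z mod p = k mod p"
    unfolding A_E_def by blast
  show "prime p \<and> nz E p"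
  proof (cases "p dvd k")
    case False
    have "tp E p k" unfolding tp_def using k(2) by auto
    then show ?thesis using p False unfolding nz_def by blast
  next
    case True
    then have "\<forall>z\<in>E. p dvd z" using k(2) by (auto simp: dvd_eq_mod_eq_0)
    then have "tp E p 1" unfolding tp_def by blast
    moreover have "\<not> p dvd 1" using p by (metis not_prime_unit)
    ultimately show ?thesis using p unfolding nz_def by blast
  qed
next
  assume "prime p \<and> nz E p"
  then obtain y where p: "prime p" and y: "tp E p y" "\<not> p dvd y" unfolding nz_def by blast
  have "0 < y" using y(2) by (cases y) auto
  moreover have "\<forall>z\<in>E. p dvd z \<or> z mod p = y mod p" using y unfolding tp_def by auto
  ultimately show "p \<in> A_E E" unfolding A_E_def using p by blast
qed

theorem lemma3p12:
  fixes E :: "nat set"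
  assumes "finite E" and "E \<noteq> {}" and "E \<subseteq> {0<..}"
  shows "filt E \<in> F2 \<longleftrightarrow>
    ((\<exists>p. prime p \<and> odd p \<and> p \<in> Pi_E E \<and> A_E E = {2, p}) \<or>
     (\<exists>p q. prime p \<and> prime q \<and> odd p \<and> odd q \<and> p \<noteq> q \<and>
            A_E E = {2, p, q} \<and> Pi_E E \<subseteq> {2}))"
proof -
  have pi: "p \<in> Pi_E E \<longleftrightarrow> prime p \<and> full E p" if "prime p" "p \<noteq> 2" for p
    using PiE_iff[OF assms(2,3)] full_iff[OF that] that by blast
  have S1: "(\<exists>p. prime p \<and> odd p \<and> p \<in> Pi_E E \<and> A_E E = {2, p}) \<longleftrightarrow> CA E"
  proof
    assume "\<exists>p. prime p \<and> odd p \<and> p \<in> Pi_E E \<and> A_E E = {2, p}"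
    then obtain p where p: "prime p" "odd p" "p \<in> Pi_E E" "A_E E = {2, p}" by blast
    have p2: "p \<noteq> 2" using p(2) by auto
    have "full E p" using pi[OF p(1) p2] p(3) by blast
    moreover have "q = p" if "prime q" "q \<noteq> 2" "nz E q" for q
    proof -
      have "q \<in> A_E E" using AE_iff that by blast
      then show ?thesis using p(4) that(2) by auto
    qed
    ultimately show "CA E" unfolding CA_def using p(1) p2 by blast
  next
    assume "CA E"
    then obtain p where p: "prime p" "p \<noteq> 2" "full E p" and u: "\<forall>q. prime q \<and> q \<noteq> 2 \<and> nz E q \<longrightarrow> q = p"
      unfolding CA_def by blast
    have "odd p" using odd_prime_iff[OF p(1)] p(2) by blast
    moreover have "p \<in> Pi_E E" using pi[OF p(1,2)] p by blast
    moreover have "A_E E = {2, p}"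
    proof (intro set_eqI iffI)
      fix x assume "x \<in> A_E E"
      then have "prime x" "nz E x" using AE_iff by blast+
      then show "x \<in> {2, p}" using u by blast
    next
      fix x assume "x \<in> {2, p}"
      then show "x \<in> A_E E" using AE_iff nz_two full_nz[OF p(1,3)] p(1) two_is_prime_nat by auto
    qed
    ultimately show "\<exists>p. prime p \<and> odd p \<and> p \<in> Pi_E E \<and> A_E E = {2, p}" using p(1) by blast
  qed
  have S2: "(\<exists>p q. prime p \<and> prime q \<and> odd p \<and> odd q \<and> p \<noteq> q \<and>
            A_E E = {2, p, q} \<and> Pi_E E \<subseteq> {2}) \<longleftrightarrow> CB E"
  proof
    assume "\<exists>p q. prime p \<and> prime q \<and> odd p \<and> odd q \<and> p \<noteq> q \<and> A_E E = {2, p, q} \<and> Pi_E E \<subseteq> {2}"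
    then obtain p q where pq: "prime p" "prime q" "odd p" "odd q" "p \<noteq> q" "A_E E = {2, p, q}" "Pi_E E \<subseteq> {2}"
      by blast
    have p2: "p \<noteq> 2" "q \<noteq> 2" using pq(3,4) by auto
    have "nz E p" "nz E q" using pq(6) AE_iff by auto
    moreover have "l = p \<or> l = q" if "prime l" "l \<noteq> 2" "nz E l" for l
    proof -
      have "l \<in> A_E E" using AE_iff that by blast
      then show ?thesis using pq(6) that(2) by auto
    qed
    moreover have "\<not> full E l" if "prime l" "l \<noteq> 2" for l
      using pi[OF that] pq(7) that by blast
    ultimately show "CB E" unfolding CB_def using pq(1,2,5) p2 by blast
  next
    assume "CB E"
    then obtain p q where pq: "prime p" "prime q" "p \<noteq> 2" "q \<noteq> 2" "p \<noteq> q" "nz E p" "nz E q"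
          and u: "\<forall>l. prime l \<and> l \<noteq> 2 \<and> nz E l \<longrightarrow> l = p \<or> l = q"
          and nf: "\<forall>l. prime l \<and> l \<noteq> 2 \<longrightarrow> \<not> full E l"
      unfolding CB_def by blast
    have "odd p" "odd q" using odd_prime_iff pq by blast+
    moreover have "A_E E = {2, p, q}"
    proof (intro set_eqI iffI)
      fix x assume "x \<in> A_E E"
      then have "prime x" "nz E x" using AE_iff by blast+
      then show "x \<in> {2, p, q}" using u by blast
    next
      fix x assume "x \<in> {2, p, q}"
      then show "x \<in> A_E E" using AE_iff nz_two pq two_is_prime_nat by auto
    qed
    moreover have "Pi_E E \<subseteq> {2}"
    proof
      fix x assume x: "x \<in> Pi_E E"
      then have "prime x" using PiE_iff[OF assms(2,3)] by blast
      then show "x \<in> {2}" using x pi nf by blast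
    qed
    ultimately show "\<exists>p q. prime p \<and> prime q \<and> odd p \<and> odd q \<and> p \<noteq> q \<and> A_E E = {2, p, q} \<and> Pi_E E \<subseteq> {2}"
      using pq(1,2,5) by blast
  qed
  show ?thesis unfolding S1 S2 using F2_imp[OF assms(1,3)] F2_if[OF assms(1,3)] by blast
qed

end
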